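(* Let $t\ge 2$. If $G$ is a stitched 2-ichromatic ordered graph whose parts have sizes $m$ and $n$, then $R_t(G)\ge 2tr+1$, where $r=\min(m,n)-1$.
   Context: An ordered graph is a graph together with a specified linear ordering of its vertex set. An ordered graph $G$ is contained in an ordered graph $H$ if there is an order-preserving injection $V(G)\to V(H)$ mapping edges to edges. An interval coloring of an ordered graph is a partition of its vertex set into independent sets each consisting of consecutive vertices (called parts); an ordered graph is 2-ichromatic if its minimum number of parts in an interval coloring is 2. A 2-ichromatic ordered graph is stitched if the four vertices consisting of the first and last vertex of each of the two parts lie in a single connected component (then the interval 2-coloring is unique). $R_t(G)$ is the minimum $N$ such that every coloring of the edges of the ordered complete graph on $N$ vertices with $t$ colors contains a monochromatic copy of $G$. *)

theory Defs
  imports Main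
begin

text \<open>An ordered graph on k vertices is represented by its vertex count k (vertex set
  {0..<k}, ordered by the natural order) and an edge relation E on it.\<close>

definition ordered_graph :: "nat \<Rightarrow> (nat \<Rightarrow> nat \<Rightarrow> bool) \<Rightarrow> bool" where
  "ordered_graph k E \<longleftrightarrow>
     (\<forall>i j. E i j \<longrightarrow> i < k \<and> j < k) \<and> (\<forall>i j. E i j \<longrightarrow> E j i) \<and> (\<forall>i. \<not> E i i)"

definition independent :: "(nat \<Rightarrow> nat \<Rightarrow> bool) \<Rightarrow> nat set \<Rightarrow> bool" where
  "independent E S \<longleftrightarrow> (\<forall>i\<in>S. \<forall>j\<in>S. \<not> E i j)"

definition interval_coloring :: "nat \<Rightarrow> (nat \<Rightarrow> nat \<Rightarrow> bool) \<Rightarrow> nat \<Rightarrow> (nat \<Rightarrow> nat) \<Rightarrow> bool" where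
  "interval_coloring k E q b \<longleftrightarrow>
     b 0 = 0 \<and> b q = k \<and> (\<forall>i<q. b i < b (Suc i)) \<and>
     (\<forall>i<q. independent E {b i..<b (Suc i)})"

definition ichromatic_number :: "nat \<Rightarrow> (nat \<Rightarrow> nat \<Rightarrow> bool) \<Rightarrow> nat" where
  "ichromatic_number k E = (LEAST q. \<exists>b. interval_coloring k E q b)"

definition two_ichromatic :: "nat \<Rightarrow> (nat \<Rightarrow> nat \<Rightarrow> bool) \<Rightarrow> bool" where
  "two_ichromatic k E \<longleftrightarrow> ichromatic_number k E = 2"

definition same_component :: "nat \<Rightarrow> (nat \<Rightarrow> nat \<Rightarrow> bool) \<Rightarrow> nat \<Rightarrow> nat \<Rightarrow> bool" where
  "same_component k E u v \<longleftrightarrow> (\<lambda>x y. x < k \<and> y < k \<and> E x y)\<^sup>*\<^sup>* u v"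

definition stitched :: "nat \<Rightarrow> (nat \<Rightarrow> nat \<Rightarrow> bool) \<Rightarrow> (nat \<Rightarrow> nat) \<Rightarrow> bool" where
  "stitched k E b \<longleftrightarrow> two_ichromatic k E \<and> interval_coloring k E 2 b \<and>
     (\<forall>v\<in>{b 0, b 1 - 1, b 1, b 2 - 1}. same_component k E (b 0) v)"

text \<open>Edge colorings of the ordered complete graph on {0..<N}: the edge {i,j} with i<j gets
  color c i j < t.\<close>

definition edge_coloring :: "nat \<Rightarrow> nat \<Rightarrow> (nat \<Rightarrow> nat \<Rightarrow> nat) \<Rightarrow> bool" where
  "edge_coloring N t c \<longleftrightarrow> (\<forall>i j. i < j \<and> j < N \<longrightarrow> c i j < t)"

definition mono_copy :: "nat \<Rightarrow> (nat \<Rightarrow> nat \<Rightarrow> bool) \<Rightarrow> nat \<Rightarrow> (nat \<Rightarrow> nat \<Rightarrow> nat) \<Rightarrow> bool" where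
  "mono_copy k E N c \<longleftrightarrow> (\<exists>f col. strict_mono_on {0..<k} f \<and> f ` {0..<k} \<subseteq> {0..<N} \<and>
     (\<forall>i j. i < j \<and> j < k \<and> E i j \<longrightarrow> c (f i) (f j) = col))"

definition ordered_ramsey :: "nat \<Rightarrow> nat \<Rightarrow> (nat \<Rightarrow> nat \<Rightarrow> bool) \<Rightarrow> nat" where
  "ordered_ramsey t k E = (LEAST N. \<forall>c. edge_coloring N t c \<longrightarrow> mono_copy k E N c)"

end

theory Submission
  imports Defs "HOL-Library.Ramsey"
begin

definition F :: "nat \<Rightarrow> nat \<Rightarrow> nat \<Rightarrow> nat" where
 "F t i j = (if i + j + 1 < 2*t then i else if i + j + 1 > 2*t then 2*t - 1 - j else min (i+1) (t-1))"
definition labA :: "nat \<Rightarrow> nat \<Rightarrow> nat \<Rightarrow> nat" where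
 "labA t c i = (if i = c then 1 else if c < i \<and> i + c + 1 \<le> 2*t then (if c + 1 = t then 1 else 2)
     else if i + 1 = c then 3 else 4 + 2*i)"
definition labB :: "nat \<Rightarrow> nat \<Rightarrow> nat \<Rightarrow> nat" where
 "labB t c j = (if c \<le> j \<and> j + c + 1 < 2*t then 1 else if j + c + 1 = 2*t then (if c + 1 = t then 1 else 2)
     else if j + c = 2*t then 3 else 5 + 2*j)"

lemma F_lt: "i \<le> j \<Longrightarrow> j < 2*t \<Longrightarrow> F t i j < t"
  unfolding F_def by auto

lemma edge_lab: "i \<le> j \<Longrightarrow> j < 2*t \<Longrightarrow> labA t (F t i j) i = labB t (F t i j) j"
proof -
  assume ij: "i \<le> j" "j < 2*t"
  consider "i + j + 1 < 2*t" | "i + j + 1 > 2*t" | "i + j + 1 = 2*t" "i + 1 < t" | "i + j + 1 = 2*t" "\<not> i + 1 < t"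
    by linarith
  then show ?thesis
  proof cases
    case 1
    then have F: "F t i j = i" by (simp add: F_def)
    have A: "labA t i i = 1" by (simp add: labA_def)
    have B: "labB t i j = 1" using 1 ij by (simp add: labB_def)
    show ?thesis using A B F by simp
  next
    case 2
    define c where "c = 2*t - 1 - j"
    then have F: "F t i j = c" using 2 by (simp add: F_def)
    have c1: "i \<noteq> c" "c < i" "i + c + 1 \<le> 2*t" "j + c + 1 = 2*t" using 2 ij c_def by auto
    have A: "labA t c i = (if c + 1 = t then 1 else 2)" using c1 by (simp add: labA_def)
    have B: "labB t c j = (if c + 1 = t then 1 else 2)" using c1 by (simp add: labB_def)
    show ?thesis using A B F by simp
  next
    case 3
    then have F: "F t i j = i + 1" by (simp add: F_def)
    have A: "labA t (i+1) i = 3" by (simp add: labA_def)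
    have B: "labB t (i+1) j = 3" using 3 by (simp add: labB_def)
    show ?thesis using A B F by simp
  next
    case 4
    then have it: "i = t - 1" "j = t" "t \<ge> 1" using ij by auto
    then have F: "F t i j = t - 1" using 4 by (simp add: F_def)
    have A: "labA t (t-1) i = 1" using it by (simp add: labA_def)
    have B: "labB t (t-1) j = 1" using it by (simp add: labB_def)
    show ?thesis using A B F by simp
  qed
qed

lemma labA1: "labA t c i = 1 \<Longrightarrow> i = c \<or> (c < i \<and> i + c + 1 \<le> 2*t \<and> c + 1 = t)"
  unfolding labA_def by (auto split: if_split_asm)
lemma labA3: "labA t c i = 3 \<Longrightarrow> i + 1 = c"
  unfolding labA_def by (auto split: if_split_asm)
lemma labB1: "labB t c j = 1 \<Longrightarrow> (c \<le> j \<and> j + c + 1 < 2*t) \<or> (j + c + 1 = 2*t \<and> c + 1 = t)"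
  unfolding labB_def by (auto split: if_split_asm)
lemma labB2: "labB t c j = 2 \<Longrightarrow> j + c + 1 = 2*t"
  unfolding labB_def by (auto split: if_split_asm)
lemma labAB: "labA t c i = labB t c j \<Longrightarrow> labA t c i \<in> {1,2,3}"
proof -
  assume h: "labA t c i = labB t c j"
  have "labA t c i \<in> {1,2,3} \<or> even (labA t c i)" unfolding labA_def by auto
  moreover have "labB t c j \<in> {1,2,3} \<or> odd (labB t c j)" unfolding labB_def by auto
  ultimately show ?thesis using h by auto
qed

lemma contra: "ia1 < ia2 \<Longrightarrow> ia2 \<le> jb1 \<Longrightarrow> jb1 < jb2 \<Longrightarrow> labA t c ia1 = v \<Longrightarrow> labA t c ia2 = v
   \<Longrightarrow> labB t c jb1 = v \<Longrightarrow> labB t c jb2 = v \<Longrightarrow> False"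
proof -
  assume h: "ia1 < ia2" "ia2 \<le> jb1" "jb1 < jb2" "labA t c ia1 = v" "labA t c ia2 = v"
    "labB t c jb1 = v" "labB t c jb2 = v"
  then have "v \<in> {1,2,3}" using labAB[of t c ia1 jb1] by auto
  then consider "v = 1" | "v = 2" | "v = 3" by auto
  then show False
  proof cases
    case 1
    then show False using labA1[of t c ia1] labA1[of t c ia2] labB1[of t c jb2] h by auto
  next
    case 2
    then show False using labB2[of t c jb1] labB2[of t c jb2] h by auto
  next
    case 3
    then show False using labA3[of t c ia1] labA3[of t c ia2] h by auto
  qed
qed

lemma smono_gap:
  fixes f :: "nat \<Rightarrow> nat" and a b k :: nat
  assumes "strict_mono_on {0..<k} f"
  shows "a \<le> b \<Longrightarrow> b < k \<Longrightarrow> f a + (b - a) \<le> f b"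
proof (induction b)
  case 0 then show ?case by simp
next
  case (Suc b)
  show ?case
  proof (cases "a = Suc b")
    case True then show ?thesis by simp
  next
    case False
    then have "a \<le> b" using Suc by simp
    then have "f a + (b - a) \<le> f b" using Suc by simp
    moreover have "f b < f (Suc b)" using assms(1) Suc.prems
      by (auto simp: strict_mono_on_def)
    ultimately show ?thesis using \<open>a \<le> b\<close> by simp
  qed
qed

lemma ramsey_exists:
  assumes "t \<ge> 1"
  shows "\<exists>N. \<forall>c. edge_coloring N t c \<longrightarrow> mono_copy k E N c"
proof -
  obtain N :: nat where N: "partn_lst {..<N} (replicate t k) 2"
    using ramsey_full[of "replicate t k" 2] by blast
  show ?thesis
  proof (intro exI allI impI)
    fix c assume ec: "edge_coloring N t c"
    define g where "g X = c (Min X) (Max X)" for X :: "nat set"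
    have g: "g \<in> nsets {..<N} 2 \<rightarrow> {..<t}"
    proof
      fix X assume "X \<in> nsets {..<N} 2"
      then obtain x y where xy: "X = {x,y}" "x < y" "y < N"
        by (auto simp: nsets_def card_2_iff) (metis insert_commute linorder_neqE_nat)+
      then show "g X \<in> {..<t}" using ec by (auto simp: g_def edge_coloring_def)
    qed
    obtain i H where i: "i < length (replicate t k)" "H \<in> nsets {..<N} (replicate t k ! i)"
        "g ` nsets H 2 \<subseteq> {i}"
      using partn_lstE[OF N g] by auto
    have H: "finite H" "card H = k" "H \<subseteq> {..<N}" using i by (auto simp: nsets_def)
    define f where "f j = sorted_list_of_set H ! j" for j
    have len: "length (sorted_list_of_set H) = k" using H by simp
    have sm: "strict_mono_on {0..<k} f"
      unfolding strict_mono_on_def f_def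
      using sorted_wrt_nth_less[OF strict_sorted_list_of_set[of H]] len
      by auto
    have inH: "j < k \<Longrightarrow> f j \<in> H" for j
      unfolding f_def using len H(1) by (metis nth_mem sorted_list_of_set.set_sorted_key_list_of_set)
    show "mono_copy k E N c"
      unfolding mono_copy_def
    proof (intro exI conjI allI impI)
      show "strict_mono_on {0..<k} f" by (rule sm)
      show "f ` {0..<k} \<subseteq> {0..<N}" using H(3) by (force dest: inH)
    next
      fix j l assume "j < l \<and> l < k \<and> E j l"
      then have jl: "j < l" "l < k" by auto
      have lt: "f j < f l" using sm jl by (auto simp: strict_mono_on_def)
      have "{f j, f l} \<in> nsets H 2" using lt inH jl by (auto simp: nsets_def)
      then have "g {f j, f l} \<in> g ` nsets H 2" by (rule imageI)
      then have "g {f j, f l} = i" using i(3) by blast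
      then show "c (f j) (f l) = i" using lt by (simp add: g_def)
    qed
  qed
qed

theorem corollary5p1:
  fixes t k :: nat and E :: "nat \<Rightarrow> nat \<Rightarrow> bool" and b :: "nat \<Rightarrow> nat"
  assumes "t \<ge> 2"
    and "ordered_graph k E"
    and "stitched k E b"
  shows "ordered_ramsey t k E \<ge> 2 * t * (min (b 1 - b 0) (b 2 - b 1) - 1) + 1"
proof -
  define m where "m = b 1"
  have ic: "interval_coloring k E 2 b" and sc: "\<forall>v\<in>{b 0, b 1 - 1, b 1, b 2 - 1}. same_component k E (b 0) v"
    using assms(3) by (auto simp: stitched_def)
  have b0: "b 0 = 0" and b2: "b 2 = k" and b01: "b 0 < b 1" and b12: "b 1 < b 2"
    and ind1: "independent E {b 0..<b 1}" and ind2: "independent E {b 1..<b 2}"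
    using ic unfolding interval_coloring_def by (auto simp: numeral_2_eq_2)
  define r where "r = min (b 1 - b 0) (b 2 - b 1) - 1"
  have rm: "r + 1 \<le> m" and rn: "r + 1 \<le> k - m" using b01 b12 b0 b2 by (auto simp: r_def m_def)
  have m0: "0 < m" and mk: "m < k" using b01 b12 b0 b2 by (auto simp: m_def)
  have Esym: "E x y \<Longrightarrow> E y x" for x y using assms(2) by (auto simp: ordered_graph_def)
  have Eirr: "\<not> E x x" for x using assms(2) by (auto simp: ordered_graph_def)
  have Ebip: "E x y \<Longrightarrow> x < y \<Longrightarrow> y < k \<Longrightarrow> x < m \<and> m \<le> y" for x y
    using ind1 ind2 b0 b2 unfolding independent_def m_def
    by (metis atLeastLessThan_iff le0 leI less_trans order_less_imp_le)
  define P where "P N = (\<forall>c. edge_coloring N t c \<longrightarrow> mono_copy k E N c)" for N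
  have ex: "\<exists>N. P N" using ramsey_exists[of t k E] assms(1) by (auto simp: P_def)
  define col where "col x y = F t (x div r) (y div r)" for x y
  have noP: "\<not> P N" if NM: "N \<le> 2 * t * r" for N
  proof (cases "r = 0")
    case True
    then have "N = 0" using NM by simp
    have "\<not> mono_copy k E N c" for c
      using \<open>N = 0\<close> mk unfolding mono_copy_def by auto
    then show ?thesis unfolding P_def edge_coloring_def using \<open>N = 0\<close> by auto
  next
    case False
    then have r0: "r > 0" by simp
    have ec: "edge_coloring N t col"
      unfolding edge_coloring_def col_def
    proof (intro allI impI)
      fix i j assume "i < j \<and> j < N"
      then have "i div r \<le> j div r" "j div r < 2 * t"
        using NM r0 by (auto simp: div_le_mono less_mult_imp_div_less mult.commute)
      then show "F t (i div r) (j div r) < t" by (rule F_lt)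
    qed
    have "\<not> mono_copy k E N col"
    proof
      assume "mono_copy k E N col"
      then obtain f cc where sm: "strict_mono_on {0..<k} f" and im: "f ` {0..<k} \<subseteq> {0..<N}"
        and ed: "\<And>i j. i < j \<and> j < k \<and> E i j \<Longrightarrow> col (f i) (f j) = cc"
        unfolding mono_copy_def by blast
      define lab where "lab v = (if v < m then labA t cc (f v div r) else labB t cc (f v div r))" for v
      have step: "lab x = lab y" if "E x y" "x < k" "y < k" for x y
      proof -
        have key: "lab x = lab y" if "E x y" "x < y" "y < k" for x y
        proof -
          have xy: "x < m" "m \<le> y" using Ebip that by auto
          have fxy: "f x < f y" using sm that by (auto simp: strict_mono_on_def)
          have fy: "f y < 2 * t * r" using im that NM by force
          have d: "f x div r \<le> f y div r" "f y div r < 2 * t"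
            using fxy fy r0 by (auto simp: div_le_mono less_mult_imp_div_less mult.commute)
          have "col (f x) (f y) = cc" using ed that by blast
          then have "F t (f x div r) (f y div r) = cc" by (simp add: col_def)
          then show ?thesis using edge_lab[OF d] xy unfolding lab_def by auto
        qed
        show ?thesis
        proof (cases "x < y")
          case True show ?thesis by (rule key[OF that(1) True that(3)])
        next
          case False
          have "y < x" using False Eirr[of x] that(1) by (cases "x = y") auto
          then show ?thesis using key[OF Esym[OF that(1)] \<open>y < x\<close> that(2)] by simp
        qed
      qed
      have reach: "lab v = lab 0" if "same_component k E 0 v" for v
      proof -
        have "(\<lambda>x y. x < k \<and> y < k \<and> E x y)\<^sup>*\<^sup>* 0 v" using that by (simp add: same_component_def)
        then show ?thesis
          by (induction rule: rtranclp_induct) (use step in auto)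
      qed
      have sc1: "same_component k E 0 (m - 1)" "same_component k E 0 m" "same_component k E 0 (k - 1)"
        using sc unfolding b0 b2 m_def by auto
      have l1: "lab (m - 1) = lab 0" using reach[OF sc1(1)] .
      have l2: "lab m = lab 0" using reach[OF sc1(2)] .
      have l3: "lab (k - 1) = lab 0" using reach[OF sc1(3)] .
      have g1: "f 0 + (m - 1) \<le> f (m - 1)" using smono_gap[OF sm, of 0 "m - 1"] mk by simp
      have g2: "f m + (k - 1 - m) \<le> f (k - 1)" using smono_gap[OF sm, of m "k - 1"] mk by simp
      have g3: "f (m - 1) < f m" using sm m0 mk by (auto simp: strict_mono_on_def)
      have dd: "x + r \<le> y \<Longrightarrow> x div r < y div r" for x y
      proof -
        assume "x + r \<le> y"
        then have "(x + r) div r \<le> y div r" by (rule div_le_mono)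
        then show "x div r < y div r" using r0 by simp
      qed
      have i1: "f 0 div r < f (m - 1) div r" using dd g1 rm by auto
      have i2: "f (m - 1) div r \<le> f m div r" using g3 by (simp add: div_le_mono)
      have i3: "f m div r < f (k - 1) div r" using dd g2 rn by auto
      have e0: "lab 0 = labA t cc (f 0 div r)" using m0 by (simp add: lab_def)
      have e1: "lab (m - 1) = labA t cc (f (m - 1) div r)" using m0 by (simp add: lab_def)
      have e2: "lab m = labB t cc (f m div r)" by (simp add: lab_def)
      have "\<not> (k - 1 < m)" using mk by simp
      then have e3: "lab (k - 1) = labB t cc (f (k - 1) div r)" unfolding lab_def by (rule if_not_P)
      have p1: "labA t cc (f 0 div r) = lab 0" using e0 by simp
      have p2: "labA t cc (f (m - 1) div r) = lab 0" using e1 l1 by simp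
      have p3: "labB t cc (f m div r) = lab 0" using e2 l2 by simp
      have p4: "labB t cc (f (k - 1) div r) = lab 0" using e3 l3 by simp
      show False by (rule contra[OF i1 i2 i3 p1 p2 p3 p4])
    qed
    then show ?thesis using ec unfolding P_def by blast
  qed
  have "\<not> (Least P < 2 * t * r + 1)"
  proof
    assume "Least P < 2 * t * r + 1"
    moreover have "P (Least P)" using ex by (rule LeastI_ex)
    ultimately show False using noP by auto
  qed
  then show ?thesis unfolding ordered_ramsey_def r_def P_def by simp
qed

end
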